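(* Let $F\colon[0,1]^*\to\mathbb{R}$ be a standard function such that $F_1$ is strictly increasing (resp. strictly decreasing). Then the following are equivalent: (1) $F$ is preassociative and unarily quasi-range-idempotent, and $F_2$ is symmetric, nondecreasing (resp. nonincreasing) in each argument, and satisfies $F_2(1,x)=F_1(x)$ for every $x\in[0,1]$; (2) there exist a strictly increasing (resp. strictly decreasing) function $f\colon[0,1]\to\mathbb{R}$ and a variadic t-norm $H\colon[0,1]^*\to[0,1]\cup\{\varepsilon\}$ such that $F^{\flat}=f\circ H^{\flat}$. In this case $f=F_1$.
   Context: $X^*=\bigcup_{n\geqslant 0}X^n$ denotes the finite tuples over $X$, $X^0=\{\varepsilon\}$ with $\varepsilon\notin X$ the empty tuple; $F(\mathbf{x},\mathbf{y})$ denotes $F$ applied to the concatenation, concatenation with $\varepsilon$ leaving tuples unchanged. $F_n=F|_{X^n}$, $F^{\flat}=F|_{X^*\setminus\{\varepsilon\}}$. $F$ is standard if $F(\mathbf{x})=F(\varepsilon)$ only for $\mathbf{x}=\varepsilon$. $F$ is preassociative if for all tuples $\mathbf{x},\mathbf{y},\mathbf{y}',\mathbf{z}$, $F(\mathbf{y})=F(\mathbf{y}')$ implies $F(\mathbf{x},\mathbf{y},\mathbf{z})=F(\mathbf{x},\mathbf{y}',\mathbf{z})$. $F$ is unarily quasi-range-idempotent if $\mathrm{ran}(F_1)=\mathrm{ran}(F^{\flat})$. An operation $H\colon X^*\to X\cup\{\varepsilon\}$ is $\varepsilon$-standard if $H(\varepsilon)=\varepsilon$ and $H(\mathbf{x})\neq\varepsilon$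 for $\mathbf{x}\neq\varepsilon$, and associative if $H(\mathbf{x},\mathbf{y},\mathbf{z})=H(\mathbf{x},H(\mathbf{y}),\mathbf{z})$ for all tuples (a value $\varepsilon$ treated as the empty tuple). A t-norm is an operation $T\colon[0,1]^2\to[0,1]$ that is nondecreasing in each argument, symmetric, associative, and satisfies $T(1,x)=x$ for all $x$. A variadic t-norm is an associative $\varepsilon$-standard operation $H\colon[0,1]^*\to[0,1]\cup\{\varepsilon\}$ whose binary part $H_2$ is a t-norm. *)

theory Defs
  imports Complex_Main
begin

text \<open>An operation H with values in
  [0,1] union {epsilon} is modelled as a map into real option, None standing for epsilon.\<close>

definition I01 :: "real set" where "I01 = {0..1}"

definition tuples :: "real list set" where "tuples = {xs. set xs \<subseteq> I01}"

definition standard :: "(real list \<Rightarrow> real) \<Rightarrow> bool" where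
  "standard F \<longleftrightarrow> (\<forall>xs\<in>tuples. F xs = F [] \<longrightarrow> xs = [])"

definition preassociative :: "(real list \<Rightarrow> real) \<Rightarrow> bool" where
  "preassociative F \<longleftrightarrow> (\<forall>x\<in>tuples. \<forall>y\<in>tuples. \<forall>y'\<in>tuples. \<forall>z\<in>tuples.
      F y = F y' \<longrightarrow> F (x @ y @ z) = F (x @ y' @ z))"

definition unarily_quasi_range_idempotent :: "(real list \<Rightarrow> real) \<Rightarrow> bool" where
  "unarily_quasi_range_idempotent F \<longleftrightarrow>
     (\<lambda>x. F [x]) ` I01 = F ` (tuples - {[]})"

definition strict_incr_on :: "real set \<Rightarrow> (real \<Rightarrow> real) \<Rightarrow> bool" where
  "strict_incr_on S f \<longleftrightarrow> (\<forall>x\<in>S. \<forall>y\<in>S. x < y \<longrightarrow> f x < f y)"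

definition strict_decr_on :: "real set \<Rightarrow> (real \<Rightarrow> real) \<Rightarrow> bool" where
  "strict_decr_on S f \<longleftrightarrow> (\<forall>x\<in>S. \<forall>y\<in>S. x < y \<longrightarrow> f x > f y)"

definition symmetric2 :: "(real list \<Rightarrow> real) \<Rightarrow> bool" where
  "symmetric2 F \<longleftrightarrow> (\<forall>x\<in>I01. \<forall>y\<in>I01. F [x, y] = F [y, x])"

definition nondecr2 :: "(real list \<Rightarrow> real) \<Rightarrow> bool" where
  "nondecr2 F \<longleftrightarrow> (\<forall>x\<in>I01. \<forall>x'\<in>I01. \<forall>y\<in>I01. x \<le> x' \<longrightarrow>
      F [x, y] \<le> F [x', y] \<and> F [y, x] \<le> F [y, x'])"

definition nonincr2 :: "(real list \<Rightarrow> real) \<Rightarrow> bool" where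
  "nonincr2 F \<longleftrightarrow> (\<forall>x\<in>I01. \<forall>x'\<in>I01. \<forall>y\<in>I01. x \<le> x' \<longrightarrow>
      F [x, y] \<ge> F [x', y] \<and> F [y, x] \<ge> F [y, x'])"

definition unit1_2 :: "(real list \<Rightarrow> real) \<Rightarrow> bool" where
  "unit1_2 F \<longleftrightarrow> (\<forall>x\<in>I01. F [1, x] = F [x])"

definition opt_tuple :: "real option \<Rightarrow> real list" where
  "opt_tuple v = (case v of None \<Rightarrow> [] | Some a \<Rightarrow> [a])"

definition valued_in :: "(real list \<Rightarrow> real option) \<Rightarrow> bool" where
  "valued_in H \<longleftrightarrow> (\<forall>xs\<in>tuples. H xs = None \<or> (\<exists>a\<in>I01. H xs = Some a))"

definition eps_standard :: "(real list \<Rightarrow> real option) \<Rightarrow> bool" where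
  "eps_standard H \<longleftrightarrow> H [] = None \<and> (\<forall>xs\<in>tuples. xs \<noteq> [] \<longrightarrow> H xs \<noteq> None)"

definition associative_op :: "(real list \<Rightarrow> real option) \<Rightarrow> bool" where
  "associative_op H \<longleftrightarrow> (\<forall>x\<in>tuples. \<forall>y\<in>tuples. \<forall>z\<in>tuples.
      H (x @ y @ z) = H (x @ opt_tuple (H y) @ z))"

definition t_norm :: "(real \<Rightarrow> real \<Rightarrow> real) \<Rightarrow> bool" where
  "t_norm T \<longleftrightarrow>
     (\<forall>x\<in>I01. \<forall>y\<in>I01. T x y \<in> I01) \<and>
     (\<forall>x\<in>I01. \<forall>x'\<in>I01. \<forall>y\<in>I01. x \<le> x' \<longrightarrow> T x y \<le> T x' y \<and> T y x \<le> T y x') \<and>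
     (\<forall>x\<in>I01. \<forall>y\<in>I01. T x y = T y x) \<and>
     (\<forall>x\<in>I01. \<forall>y\<in>I01. \<forall>z\<in>I01. T (T x y) z = T x (T y z)) \<and>
     (\<forall>x\<in>I01. T 1 x = x)"

definition variadic_t_norm :: "(real list \<Rightarrow> real option) \<Rightarrow> bool" where
  "variadic_t_norm H \<longleftrightarrow> valued_in H \<and> eps_standard H \<and> associative_op H \<and>
     t_norm (\<lambda>x y. the (H [x, y]))"

end

theory Submission
  imports Defs
begin

definition ginv :: "(real list \<Rightarrow> real) \<Rightarrow> real list \<Rightarrow> real" where
  "ginv F xs = (THE a. a \<in> I01 \<and> F [a] = F xs)"

definition Hof :: "(real list \<Rightarrow> real) \<Rightarrow> real list \<Rightarrow> real option" where
  "Hof F xs = (if xs = [] then None else Some (ginv F xs))"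

lemma tup_app: "x \<in> tuples \<Longrightarrow> y \<in> tuples \<Longrightarrow> x @ y \<in> tuples"
  by (auto simp: tuples_def)

lemma tup_cons: "a \<in> I01 \<Longrightarrow> x \<in> tuples \<Longrightarrow> a # x \<in> tuples"
  by (auto simp: tuples_def)

lemma tup_nil: "[] \<in> tuples" by (auto simp: tuples_def)

lemma ginv_prop:
  assumes inj: "inj_on (\<lambda>x. F [x]) I01" and u: "unarily_quasi_range_idempotent F"
    and xs: "xs \<in> tuples" "xs \<noteq> []"
  shows "ginv F xs \<in> I01 \<and> F [ginv F xs] = F xs"
proof -
  have "F xs \<in> (\<lambda>x. F [x]) ` I01" using u xs unfolding unarily_quasi_range_idempotent_def by auto
  then obtain a where a: "a \<in> I01" "F [a] = F xs" by auto
  have "(THE a. a \<in> I01 \<and> F [a] = F xs) = a"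
    apply (rule the_equality) using a inj unfolding inj_on_def by auto
  thus ?thesis using a by (simp add: ginv_def)
qed

lemma ginv_eq:
  assumes inj: "inj_on (\<lambda>x. F [x]) I01" and u: "unarily_quasi_range_idempotent F"
    and xs: "xs \<in> tuples" "xs \<noteq> []" and a: "a \<in> I01" "F [a] = F xs"
  shows "ginv F xs = a"
  using ginv_prop[OF inj u xs] a inj unfolding inj_on_def by auto

lemma ginv_cong: "F xs = F ys \<Longrightarrow> ginv F xs = ginv F ys"
  by (simp add: ginv_def)

lemma forward_core:
  assumes st: "standard F" and inj: "inj_on (\<lambda>x. F [x]) I01"
    and pa: "preassociative F" and u: "unarily_quasi_range_idempotent F"
    and sy: "symmetric2 F" and un: "unit1_2 F"
  shows "valued_in (Hof F) \<and> eps_standard (Hof F) \<and> associative_op (Hof F)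
    \<and> (\<forall>x\<in>I01. \<forall>y\<in>I01. ginv F [x,y] \<in> I01)
    \<and> (\<forall>x\<in>I01. \<forall>y\<in>I01. ginv F [x,y] = ginv F [y,x])
    \<and> (\<forall>x\<in>I01. \<forall>y\<in>I01. \<forall>z\<in>I01. ginv F [ginv F [x,y], z] = ginv F [x, ginv F [y,z]])
    \<and> (\<forall>x\<in>I01. ginv F [1,x] = x)
    \<and> (\<forall>xs\<in>tuples. xs \<noteq> [] \<longrightarrow> F xs = F [the (Hof F xs)])"
proof (intro conjI)
  have pa': "F (x @ y @ z) = F (x @ y' @ z)"
    if "x \<in> tuples" "y \<in> tuples" "y' \<in> tuples" "z \<in> tuples" "F y = F y'" for x y y' z
    using pa[unfolded preassociative_def, rule_format, OF that] .
  show "valued_in (Hof F)" unfolding valued_in_def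
  proof
    fix xs assume xs: "xs \<in> tuples"
    show "Hof F xs = None \<or> (\<exists>a\<in>I01. Hof F xs = Some a)"
    proof (cases "xs = []")
      case True thus ?thesis by (simp add: Hof_def)
    next
      case False
      have "ginv F xs \<in> I01" using ginv_prop[OF inj u xs False] by (rule conjunct1)
      thus ?thesis using False by (auto simp: Hof_def)
    qed
  qed
  show "eps_standard (Hof F)" unfolding eps_standard_def Hof_def by auto
  show "associative_op (Hof F)" unfolding associative_op_def
  proof (intro ballI)
    fix x y z assume xyz: "x \<in> tuples" "y \<in> tuples" "z \<in> tuples"
    show "Hof F (x @ y @ z) = Hof F (x @ opt_tuple (Hof F y) @ z)"
    proof (cases "y = []")
      case True thus ?thesis by (simp add: Hof_def opt_tuple_def)
    next
      case False
      have g: "ginv F y \<in> I01" "F [ginv F y] = F y" using ginv_prop[OF inj u xyz(2) False] by auto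
      have "F (x @ y @ z) = F (x @ [ginv F y] @ z)"
        using pa'[OF xyz(1,2) tup_cons[OF g(1) tup_nil] xyz(3)] g(2) by simp
      hence "ginv F (x @ y @ z) = ginv F (x @ [ginv F y] @ z)" by (rule ginv_cong)
      thus ?thesis using False by (simp add: Hof_def opt_tuple_def)
    qed
  qed
  show "\<forall>x\<in>I01. \<forall>y\<in>I01. ginv F [x,y] \<in> I01"
  proof (intro ballI)
    fix x y assume "x \<in> I01" "y \<in> I01"
    hence "[x,y] \<in> tuples" by (auto simp: tuples_def)
    thus "ginv F [x,y] \<in> I01" using ginv_prop[OF inj u, of "[x,y]"] by blast
  qed
  show "\<forall>x\<in>I01. \<forall>y\<in>I01. ginv F [x,y] = ginv F [y,x]"
    using sy unfolding symmetric2_def by (auto intro: ginv_cong)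
  show "\<forall>x\<in>I01. \<forall>y\<in>I01. \<forall>z\<in>I01. ginv F [ginv F [x,y], z] = ginv F [x, ginv F [y,z]]"
  proof (intro ballI)
    fix x y z assume xyz: "x \<in> I01" "y \<in> I01" "z \<in> I01"
    have t1: "[x,y] \<in> tuples" "[y,z] \<in> tuples" "[z] \<in> tuples" "[x] \<in> tuples"
      using xyz by (auto simp: tuples_def)
    have g1: "ginv F [x,y] \<in> I01" "F [ginv F [x,y]] = F [x,y]" using ginv_prop[OF inj u t1(1)] by auto
    have g2: "ginv F [y,z] \<in> I01" "F [ginv F [y,z]] = F [y,z]" using ginv_prop[OF inj u t1(2)] by auto
    have "F ([] @ [ginv F [x,y]] @ [z]) = F ([] @ [x,y] @ [z])"
      using pa'[OF tup_nil tup_cons[OF g1(1) tup_nil] t1(1) t1(3)] g1(2) by simp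
    moreover have "F ([x] @ [ginv F [y,z]] @ []) = F ([x] @ [y,z] @ [])"
      using pa'[OF t1(4) tup_cons[OF g2(1) tup_nil] t1(2) tup_nil] g2(2) by simp
    ultimately have "F [ginv F [x,y], z] = F [x, ginv F [y,z]]" by simp
    thus "ginv F [ginv F [x,y], z] = ginv F [x, ginv F [y,z]]" by (rule ginv_cong)
  qed
  show "\<forall>x\<in>I01. ginv F [1,x] = x"
  proof
    fix x assume x: "x \<in> I01"
    have "1 \<in> I01" by (simp add: I01_def)
    hence "[1,x] \<in> tuples" using x by (auto simp: tuples_def)
    moreover have "F [x] = F [1,x]" using un x unfolding unit1_2_def by auto
    ultimately show "ginv F [1,x] = x" using ginv_eq[OF inj u, of "[1,x]" x] x by blast
  qed
  show "\<forall>xs\<in>tuples. xs \<noteq> [] \<longrightarrow> F xs = F [the (Hof F xs)]"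
  proof (intro ballI impI)
    fix xs assume xs: "xs \<in> tuples" "xs \<noteq> []"
    have "F [ginv F xs] = F xs" using ginv_prop[OF inj u xs] by (rule conjunct2)
    thus "F xs = F [the (Hof F xs)]" using xs(2) by (simp add: Hof_def)
  qed
qed

lemma tn_parts1: "t_norm T \<Longrightarrow> \<forall>x\<in>I01. \<forall>y\<in>I01. T x y \<in> I01"
  unfolding t_norm_def by (elim conjE, assumption)
lemma tn_parts2: "t_norm T \<Longrightarrow> \<forall>x\<in>I01. \<forall>x'\<in>I01. \<forall>y\<in>I01. x \<le> x' \<longrightarrow> T x y \<le> T x' y \<and> T y x \<le> T y x'"
  unfolding t_norm_def by (elim conjE, assumption)
lemma tn_parts3: "t_norm T \<Longrightarrow> \<forall>x\<in>I01. \<forall>y\<in>I01. T x y = T y x"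
  unfolding t_norm_def by (elim conjE, assumption)
lemma tn_parts4: "t_norm T \<Longrightarrow> \<forall>x\<in>I01. T 1 x = x"
  unfolding t_norm_def by (elim conjE, assumption)
lemmas tn_parts = tn_parts1 tn_parts2 tn_parts3 tn_parts4

lemma tn_range: "t_norm T \<Longrightarrow> x \<in> I01 \<Longrightarrow> y \<in> I01 \<Longrightarrow> T x y \<in> I01"
  by (drule tn_parts1) (drule bspec, assumption, drule bspec, assumption, assumption)
lemma tn_mono: "t_norm T \<Longrightarrow> x \<in> I01 \<Longrightarrow> x' \<in> I01 \<Longrightarrow> y \<in> I01 \<Longrightarrow> x \<le> x'
   \<Longrightarrow> T x y \<le> T x' y \<and> T y x \<le> T y x'"
  by (drule tn_parts2) (drule bspec, assumption, drule bspec, assumption, drule bspec, assumption,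
     erule mp, assumption)
lemma tn_sym: "t_norm T \<Longrightarrow> x \<in> I01 \<Longrightarrow> y \<in> I01 \<Longrightarrow> T x y = T y x"
  by (drule tn_parts3) (drule bspec, assumption, drule bspec, assumption, assumption)
lemma tn_unit: "t_norm T \<Longrightarrow> x \<in> I01 \<Longrightarrow> T 1 x = x"
  by (drule tn_parts4) (drule bspec, assumption, assumption)
lemma vt_parts: "variadic_t_norm H \<Longrightarrow> valued_in H"  "variadic_t_norm H \<Longrightarrow> eps_standard H"
  "variadic_t_norm H \<Longrightarrow> associative_op H" "variadic_t_norm H \<Longrightarrow> t_norm (\<lambda>x y. the (H [x, y]))"
  unfolding variadic_t_norm_def by (elim conjE, assumption)+

lemma H_val:
  assumes H: "variadic_t_norm H" and xs: "xs \<in> tuples" "xs \<noteq> []"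
  shows "\<exists>a\<in>I01. H xs = Some a"
proof -
  have "H xs = None \<or> (\<exists>a\<in>I01. H xs = Some a)"
    using vt_parts(1)[OF H] xs(1) unfolding valued_in_def by (rule bspec)
  moreover have "H xs \<noteq> None"
    using vt_parts(2)[OF H] xs unfolding eps_standard_def by simp
  ultimately show ?thesis by simp
qed

lemma H_single:
  assumes H: "variadic_t_norm H" and x: "x \<in> I01"
  shows "H [x] = Some x"
proof -
  note ao = vt_parts(3)[OF H] and tn = vt_parts(4)[OF H]
  have tx: "[x] \<in> tuples" using x by (auto simp: tuples_def)
  obtain a where a: "a \<in> I01" "H [x] = Some a" using H_val[OF H tx] by blast
  have one: "1 \<in> I01" by (simp add: I01_def)
  hence t1: "[1] \<in> tuples" by (auto simp: tuples_def)
  have ao': "H (u @ v @ w) = H (u @ opt_tuple (H v) @ w)"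
    if "u \<in> tuples" "v \<in> tuples" "w \<in> tuples" for u v w
    using ao[unfolded associative_op_def, rule_format, OF that] .
  have "H ([1] @ [x] @ []) = H ([1] @ opt_tuple (H [x]) @ [])"
    by (rule ao'[OF t1 tx tup_nil])
  hence e: "H [1,x] = H [1,a]" using a(2) by (simp add: opt_tuple_def)
  have e1: "the (H [1,x]) = x" using tn_unit[OF tn x] by simp
  have e2: "the (H [1,a]) = a" using tn_unit[OF tn a(1)] by simp
  have "x = a" using e e1 e2 by metis
  thus ?thesis using a(2) by simp
qed

lemma backward_core:
  assumes st: "standard F" and inj: "inj_on f I01" and H: "variadic_t_norm H"
    and rep: "\<forall>xs\<in>tuples. xs \<noteq> [] \<longrightarrow> F xs = f (the (H xs))"
  shows "preassociative F \<and> unarily_quasi_range_idempotent F \<and> symmetric2 F \<and> unit1_2 F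
     \<and> (\<forall>x\<in>I01. f x = F [x])"
proof -
  have tn: "t_norm (\<lambda>x y. the (H [x, y]))" and ao: "associative_op H"
    using vt_parts[OF H] by auto
  have rep': "F xs = f (the (H xs))" if "xs \<in> tuples" "xs \<noteq> []" for xs
    using rep that by blast
  have F1: "\<forall>x\<in>I01. f x = F [x]"
  proof
    fix x assume x: "x \<in> I01"
    hence "[x] \<in> tuples" by (auto simp: tuples_def)
    thus "f x = F [x]" using rep'[of "[x]"] H_single[OF H x] by simp
  qed
  have pa: "preassociative F" unfolding preassociative_def
  proof (intro ballI impI)
    fix x y y' z assume t: "x \<in> tuples" "y \<in> tuples" "y' \<in> tuples" "z \<in> tuples" and e: "F y = F y'"
    show "F (x @ y @ z) = F (x @ y' @ z)"
    proof (cases "y = []")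
      case True
      hence "F y' = F []" using e by simp
      hence "y' = []" using st[unfolded standard_def, rule_format, OF t(3)] by blast
      thus ?thesis using True by simp
    next
      case False
      have y': "y' \<noteq> []"
      proof
        assume "y' = []"
        hence "F y = F []" using e by simp
        hence "y = []" using st[unfolded standard_def, rule_format, OF t(2)] by blast
        thus False using False by simp
      qed
      obtain a where a: "a \<in> I01" "H y = Some a" using H_val[OF H t(2) False] by auto
      obtain b where b: "b \<in> I01" "H y' = Some b" using H_val[OF H t(3) y'] by auto
      have "F y = f a" using rep'[OF t(2) False] a by simp
      moreover have "F y' = f b" using rep'[OF t(3) y'] b by simp
      ultimately have "f a = f b" using e by simp
      hence ab: "a = b" using inj a b unfolding inj_on_def by auto
      have "H (x @ y @ z) = H (x @ opt_tuple (H y) @ z)"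
        using ao[unfolded associative_op_def, rule_format, OF t(1,2,4)] .
      moreover have "H (x @ y' @ z) = H (x @ opt_tuple (H y') @ z)"
        using ao[unfolded associative_op_def, rule_format, OF t(1,3,4)] .
      ultimately have "H (x @ y @ z) = H (x @ y' @ z)" using a b ab by simp
      moreover have "x @ y @ z \<in> tuples" "x @ y' @ z \<in> tuples" using t by (auto intro: tup_app)
      ultimately show ?thesis using rep' False y' by simp
    qed
  qed
  have uq: "unarily_quasi_range_idempotent F" unfolding unarily_quasi_range_idempotent_def
  proof
    show "(\<lambda>x. F [x]) ` I01 \<subseteq> F ` (tuples - {[]})"
      by (auto simp: tuples_def)
    show "F ` (tuples - {[]}) \<subseteq> (\<lambda>x. F [x]) ` I01"
    proof
      fix v assume "v \<in> F ` (tuples - {[]})"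
      then obtain xs where xs: "xs \<in> tuples" "xs \<noteq> []" "v = F xs" by auto
      obtain a where a: "a \<in> I01" "H xs = Some a" using H_val[OF H xs(1,2)] by auto
      have "v = f a" using rep'[OF xs(1,2)] xs(3) a by simp
      also have "\<dots> = F [a]" using F1 a(1) by blast
      finally have "v = F [a]" .
      thus "v \<in> (\<lambda>x. F [x]) ` I01" using a by auto
    qed
  qed
  have sy: "symmetric2 F" unfolding symmetric2_def
  proof (intro ballI)
    fix x y assume xy: "x \<in> I01" "y \<in> I01"
    hence "[x,y] \<in> tuples" "[y,x] \<in> tuples" by (auto simp: tuples_def)
    thus "F [x,y] = F [y,x]" using rep' tn_sym[OF tn xy] by simp
  qed
  have un: "unit1_2 F" unfolding unit1_2_def
  proof
    fix x assume x: "x \<in> I01"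
    have "1 \<in> I01" by (simp add: I01_def)
    hence "[1,x] \<in> tuples" using x by (auto simp: tuples_def)
    hence "F [1,x] = f x" using rep' tn_unit[OF tn x] by simp
    thus "F [1,x] = F [x]" using F1 x by simp
  qed
  show ?thesis using pa uq sy un F1 by blast
qed


lemma incr_inj: "strict_incr_on S g \<Longrightarrow> inj_on g S"
  unfolding strict_incr_on_def inj_on_def by (metis less_irrefl linorder_neqE_linordered_idom)

lemma decr_inj: "strict_decr_on S g \<Longrightarrow> inj_on g S"
  unfolding strict_decr_on_def inj_on_def by (metis less_irrefl linorder_neqE_linordered_idom)

lemma ginv_mono_incr:
  assumes si: "strict_incr_on I01 (\<lambda>x. F [x])" and u: "unarily_quasi_range_idempotent F"
    and xs: "xs \<in> tuples" "xs \<noteq> []" and ys: "ys \<in> tuples" "ys \<noteq> []" and le: "F xs \<le> F ys"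
  shows "ginv F xs \<le> ginv F ys"
proof (rule ccontr)
  assume "\<not> ?thesis"
  hence lt: "ginv F ys < ginv F xs" by simp
  have a: "ginv F xs \<in> I01 \<and> F [ginv F xs] = F xs" using ginv_prop[OF incr_inj[OF si] u xs] .
  have b: "ginv F ys \<in> I01 \<and> F [ginv F ys] = F ys" using ginv_prop[OF incr_inj[OF si] u ys] .
  show False using si a b lt le unfolding strict_incr_on_def by fastforce
qed

lemma ginv_mono_decr:
  assumes si: "strict_decr_on I01 (\<lambda>x. F [x])" and u: "unarily_quasi_range_idempotent F"
    and xs: "xs \<in> tuples" "xs \<noteq> []" and ys: "ys \<in> tuples" "ys \<noteq> []" and le: "F xs \<ge> F ys"
  shows "ginv F xs \<le> ginv F ys"
proof (rule ccontr)
  assume "\<not> ?thesis"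
  hence lt: "ginv F ys < ginv F xs" by simp
  have a: "ginv F xs \<in> I01 \<and> F [ginv F xs] = F xs" using ginv_prop[OF decr_inj[OF si] u xs] .
  have b: "ginv F ys \<in> I01 \<and> F [ginv F ys] = F ys" using ginv_prop[OF decr_inj[OF si] u ys] .
  show False using si a b lt le unfolding strict_decr_on_def by fastforce
qed

lemma forward_vt:
  assumes st: "standard F" and inj: "inj_on (\<lambda>x. F [x]) I01"
    and pa: "preassociative F" and u: "unarily_quasi_range_idempotent F"
    and sy: "symmetric2 F" and un: "unit1_2 F"
    and mo: "\<forall>x\<in>I01. \<forall>x'\<in>I01. \<forall>y\<in>I01. x \<le> x' \<longrightarrow>
       ginv F [x,y] \<le> ginv F [x',y] \<and> ginv F [y,x] \<le> ginv F [y,x']"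
  shows "variadic_t_norm (Hof F) \<and> (\<forall>xs\<in>tuples. xs \<noteq> [] \<longrightarrow> F xs = F [the (Hof F xs)])"
proof -
  note fc = forward_core[OF st inj pa u sy un]
  have eqs: "the (Hof F [x, y]) = ginv F [x, y]" for x y by (simp add: Hof_def)
  have "t_norm (\<lambda>x y. the (Hof F [x, y]))"
    unfolding t_norm_def eqs
  proof (intro conjI)
    show "\<forall>x\<in>I01. \<forall>y\<in>I01. ginv F [x, y] \<in> I01" using fc by (elim conjE)
    show "\<forall>x\<in>I01. \<forall>y\<in>I01. ginv F [x, y] = ginv F [y, x]" using fc by (elim conjE)
    show "\<forall>x\<in>I01. \<forall>y\<in>I01. \<forall>z\<in>I01. ginv F [ginv F [x, y], z] = ginv F [x, ginv F [y, z]]"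
      using fc by (elim conjE)
    show "\<forall>x\<in>I01. ginv F [1, x] = x" using fc by (elim conjE)
  qed (rule mo)
  thus ?thesis using fc unfolding variadic_t_norm_def by blast
qed

lemma backward_mono:
  assumes H: "variadic_t_norm H"
    and rep: "\<forall>xs\<in>tuples. xs \<noteq> [] \<longrightarrow> F xs = f (the (H xs))"
  shows "(\<forall>a\<in>I01. \<forall>b\<in>I01. a \<le> b \<longrightarrow> f a \<le> f b) \<Longrightarrow> nondecr2 F"
    and "(\<forall>a\<in>I01. \<forall>b\<in>I01. a \<le> b \<longrightarrow> f a \<ge> f b) \<Longrightarrow> nonincr2 F"
proof -
  have tn: "t_norm (\<lambda>x y. the (H [x, y]))" using vt_parts[OF H] by auto
  have tp: "[x,y] \<in> tuples" if "x \<in> I01" "y \<in> I01" for x y using that by (auto simp: tuples_def)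
  {
    assume m: "\<forall>a\<in>I01. \<forall>b\<in>I01. a \<le> b \<longrightarrow> f a \<le> f b"
    show "nondecr2 F" unfolding nondecr2_def
    proof (intro ballI impI)
      fix x x' y assume h: "x \<in> I01" "x' \<in> I01" "y \<in> I01" "x \<le> x'"
      have "the (H [x,y]) \<le> the (H [x',y]) \<and> the (H [y,x]) \<le> the (H [y,x'])
        \<and> the (H [x,y]) \<in> I01 \<and> the (H [x',y]) \<in> I01 \<and> the (H [y,x]) \<in> I01 \<and> the (H [y,x']) \<in> I01"
        using tn_mono[OF tn h] tn_range[OF tn] h by blast
      hence A: "the (H [x,y]) \<le> the (H [x',y])" "the (H [y,x]) \<le> the (H [y,x'])"
        "the (H [x,y]) \<in> I01" "the (H [x',y]) \<in> I01" "the (H [y,x]) \<in> I01" "the (H [y,x']) \<in> I01"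
        by auto
      have B: "f (the (H [x,y])) \<le> f (the (H [x',y]))" "f (the (H [y,x])) \<le> f (the (H [y,x']))" using m A by blast+
      have C: "F [x,y] = f (the (H [x,y]))" "F [x',y] = f (the (H [x',y]))"
        "F [y,x] = f (the (H [y,x]))" "F [y,x'] = f (the (H [y,x']))"
        using rep tp[OF h(1,3)] tp[OF h(2,3)] tp[OF h(3,1)] tp[OF h(3,2)] by blast+
      show "F [x, y] \<le> F [x', y] \<and> F [y, x] \<le> F [y, x']" unfolding C using B by blast
    qed
  }
  {
    assume m: "\<forall>a\<in>I01. \<forall>b\<in>I01. a \<le> b \<longrightarrow> f a \<ge> f b"
    show "nonincr2 F" unfolding nonincr2_def
    proof (intro ballI impI)
      fix x x' y assume h: "x \<in> I01" "x' \<in> I01" "y \<in> I01" "x \<le> x'"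
      have "the (H [x,y]) \<le> the (H [x',y]) \<and> the (H [y,x]) \<le> the (H [y,x'])
        \<and> the (H [x,y]) \<in> I01 \<and> the (H [x',y]) \<in> I01 \<and> the (H [y,x]) \<in> I01 \<and> the (H [y,x']) \<in> I01"
        using tn_mono[OF tn h] tn_range[OF tn] h by blast
      hence A: "the (H [x,y]) \<le> the (H [x',y])" "the (H [y,x]) \<le> the (H [y,x'])"
        "the (H [x,y]) \<in> I01" "the (H [x',y]) \<in> I01" "the (H [y,x]) \<in> I01" "the (H [y,x']) \<in> I01"
        by auto
      have B: "f (the (H [x',y])) \<le> f (the (H [x,y]))" "f (the (H [y,x'])) \<le> f (the (H [y,x]))" using m A by blast+
      have C: "F [x,y] = f (the (H [x,y]))" "F [x',y] = f (the (H [x',y]))"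
        "F [y,x] = f (the (H [y,x]))" "F [y,x'] = f (the (H [y,x']))"
        using rep tp[OF h(1,3)] tp[OF h(2,3)] tp[OF h(3,1)] tp[OF h(3,2)] by blast+
      show "F [x', y] \<le> F [x, y] \<and> F [y, x'] \<le> F [y, x]" unfolding C using B by blast
    qed
  }
qed

lemma incr_mono: "strict_incr_on I01 f \<Longrightarrow> \<forall>a\<in>I01. \<forall>b\<in>I01. a \<le> b \<longrightarrow> f a \<le> f b"
  unfolding strict_incr_on_def by (metis order_le_less)

lemma decr_mono: "strict_decr_on I01 f \<Longrightarrow> \<forall>a\<in>I01. \<forall>b\<in>I01. a \<le> b \<longrightarrow> f a \<ge> f b"
  unfolding strict_decr_on_def by (metis order_le_less)


theorem theorem5p3:
  fixes F :: "real list \<Rightarrow> real"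
  assumes "standard F"
  shows
   "(strict_incr_on I01 (\<lambda>x. F [x]) \<longrightarrow>
      ((preassociative F \<and> unarily_quasi_range_idempotent F \<and> symmetric2 F \<and> nondecr2 F
          \<and> unit1_2 F)
        \<longleftrightarrow> (\<exists>f H. strict_incr_on I01 f \<and> variadic_t_norm H \<and>
               (\<forall>xs\<in>tuples. xs \<noteq> [] \<longrightarrow> F xs = f (the (H xs))))) \<and>
      (\<forall>f H. strict_incr_on I01 f \<and> variadic_t_norm H \<and>
               (\<forall>xs\<in>tuples. xs \<noteq> [] \<longrightarrow> F xs = f (the (H xs)))
         \<longrightarrow> (\<forall>x\<in>I01. f x = F [x])))
    \<and>
    (strict_decr_on I01 (\<lambda>x. F [x]) \<longrightarrow>
      ((preassociative F \<and> unarily_quasi_range_idempotent F \<and> symmetric2 F \<and> nonincr2 F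
          \<and> unit1_2 F)
        \<longleftrightarrow> (\<exists>f H. strict_decr_on I01 f \<and> variadic_t_norm H \<and>
               (\<forall>xs\<in>tuples. xs \<noteq> [] \<longrightarrow> F xs = f (the (H xs))))) \<and>
      (\<forall>f H. strict_decr_on I01 f \<and> variadic_t_norm H \<and>
               (\<forall>xs\<in>tuples. xs \<noteq> [] \<longrightarrow> F xs = f (the (H xs)))
         \<longrightarrow> (\<forall>x\<in>I01. f x = F [x])))"
proof (intro conjI impI)
  assume si: "strict_incr_on I01 (\<lambda>x. F [x])"
  note inj = incr_inj[OF si]
  show "(preassociative F \<and> unarily_quasi_range_idempotent F \<and> symmetric2 F \<and> nondecr2 F
          \<and> unit1_2 F)
        \<longleftrightarrow> (\<exists>f H. strict_incr_on I01 f \<and> variadic_t_norm H \<and>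
               (\<forall>xs\<in>tuples. xs \<noteq> [] \<longrightarrow> F xs = f (the (H xs))))"
  proof
    assume h: "preassociative F \<and> unarily_quasi_range_idempotent F \<and> symmetric2 F \<and> nondecr2 F
          \<and> unit1_2 F"
    have tp: "[x,y] \<in> tuples" if "x \<in> I01" "y \<in> I01" for x y using that by (auto simp: tuples_def)
    have mo: "\<forall>x\<in>I01. \<forall>x'\<in>I01. \<forall>y\<in>I01. x \<le> x' \<longrightarrow>
       ginv F [x,y] \<le> ginv F [x',y] \<and> ginv F [y,x] \<le> ginv F [y,x']"
    proof (intro ballI impI conjI)
      fix x x' y assume a: "x \<in> I01" "x' \<in> I01" "y \<in> I01" "x \<le> x'"
      have "F [x, y] \<le> F [x', y] \<and> F [y, x] \<le> F [y, x']" using h a unfolding nondecr2_def by blast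
      thus "ginv F [x,y] \<le> ginv F [x',y]" "ginv F [y,x] \<le> ginv F [y,x']"
        using ginv_mono_incr[OF si conjunct1[OF conjunct2[OF h]]] tp a by auto
    qed
    have "variadic_t_norm (Hof F) \<and> (\<forall>xs\<in>tuples. xs \<noteq> [] \<longrightarrow> F xs = F [the (Hof F xs)])"
      using forward_vt[OF assms inj conjunct1[OF h] conjunct1[OF conjunct2[OF h]]
        conjunct1[OF conjunct2[OF conjunct2[OF h]]] conjunct2[OF conjunct2[OF conjunct2[OF conjunct2[OF h]]]] mo] .
    thus "\<exists>f H. strict_incr_on I01 f \<and> variadic_t_norm H \<and>
               (\<forall>xs\<in>tuples. xs \<noteq> [] \<longrightarrow> F xs = f (the (H xs)))" using si by blast
  next
    assume "\<exists>f H. strict_incr_on I01 f \<and> variadic_t_norm H \<and>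
               (\<forall>xs\<in>tuples. xs \<noteq> [] \<longrightarrow> F xs = f (the (H xs)))"
    then obtain f H where h: "strict_incr_on I01 f" "variadic_t_norm H"
      "\<forall>xs\<in>tuples. xs \<noteq> [] \<longrightarrow> F xs = f (the (H xs))" by blast
    show "preassociative F \<and> unarily_quasi_range_idempotent F \<and> symmetric2 F \<and> nondecr2 F
          \<and> unit1_2 F"
      using backward_core[OF assms incr_inj[OF h(1)] h(2,3)]
        backward_mono(1)[OF h(2,3) incr_mono[OF h(1)]] by blast
  qed
  show "\<forall>f H. strict_incr_on I01 f \<and> variadic_t_norm H \<and>
               (\<forall>xs\<in>tuples. xs \<noteq> [] \<longrightarrow> F xs = f (the (H xs)))
         \<longrightarrow> (\<forall>x\<in>I01. f x = F [x])"
  proof (intro allI impI, elim conjE)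
    fix f H assume h: "strict_incr_on I01 f" "variadic_t_norm H"
      "\<forall>xs\<in>tuples. xs \<noteq> [] \<longrightarrow> F xs = f (the (H xs))"
    show "\<forall>x\<in>I01. f x = F [x]" using backward_core[OF assms incr_inj[OF h(1)] h(2,3)] by blast
  qed
next
  assume si: "strict_decr_on I01 (\<lambda>x. F [x])"
  note inj = decr_inj[OF si]
  show "(preassociative F \<and> unarily_quasi_range_idempotent F \<and> symmetric2 F \<and> nonincr2 F
          \<and> unit1_2 F)
        \<longleftrightarrow> (\<exists>f H. strict_decr_on I01 f \<and> variadic_t_norm H \<and>
               (\<forall>xs\<in>tuples. xs \<noteq> [] \<longrightarrow> F xs = f (the (H xs))))"
  proof
    assume h: "preassociative F \<and> unarily_quasi_range_idempotent F \<and> symmetric2 F \<and> nonincr2 F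
          \<and> unit1_2 F"
    have tp: "[x,y] \<in> tuples" if "x \<in> I01" "y \<in> I01" for x y using that by (auto simp: tuples_def)
    have mo: "\<forall>x\<in>I01. \<forall>x'\<in>I01. \<forall>y\<in>I01. x \<le> x' \<longrightarrow>
       ginv F [x,y] \<le> ginv F [x',y] \<and> ginv F [y,x] \<le> ginv F [y,x']"
    proof (intro ballI impI conjI)
      fix x x' y assume a: "x \<in> I01" "x' \<in> I01" "y \<in> I01" "x \<le> x'"
      have "F [x, y] \<ge> F [x', y] \<and> F [y, x] \<ge> F [y, x']" using h a unfolding nonincr2_def by blast
      thus "ginv F [x,y] \<le> ginv F [x',y]" "ginv F [y,x] \<le> ginv F [y,x']"
        using ginv_mono_decr[OF si conjunct1[OF conjunct2[OF h]]] tp a by auto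
    qed
    have "variadic_t_norm (Hof F) \<and> (\<forall>xs\<in>tuples. xs \<noteq> [] \<longrightarrow> F xs = F [the (Hof F xs)])"
      using forward_vt[OF assms inj conjunct1[OF h] conjunct1[OF conjunct2[OF h]]
        conjunct1[OF conjunct2[OF conjunct2[OF h]]] conjunct2[OF conjunct2[OF conjunct2[OF conjunct2[OF h]]]] mo] .
    thus "\<exists>f H. strict_decr_on I01 f \<and> variadic_t_norm H \<and>
               (\<forall>xs\<in>tuples. xs \<noteq> [] \<longrightarrow> F xs = f (the (H xs)))" using si by blast
  next
    assume "\<exists>f H. strict_decr_on I01 f \<and> variadic_t_norm H \<and>
               (\<forall>xs\<in>tuples. xs \<noteq> [] \<longrightarrow> F xs = f (the (H xs)))"
    then obtain f H where h: "strict_decr_on I01 f" "variadic_t_norm H"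
      "\<forall>xs\<in>tuples. xs \<noteq> [] \<longrightarrow> F xs = f (the (H xs))" by blast
    show "preassociative F \<and> unarily_quasi_range_idempotent F \<and> symmetric2 F \<and> nonincr2 F
          \<and> unit1_2 F"
      using backward_core[OF assms decr_inj[OF h(1)] h(2,3)]
        backward_mono(2)[OF h(2,3) decr_mono[OF h(1)]] by blast
  qed
  show "\<forall>f H. strict_decr_on I01 f \<and> variadic_t_norm H \<and>
               (\<forall>xs\<in>tuples. xs \<noteq> [] \<longrightarrow> F xs = f (the (H xs)))
         \<longrightarrow> (\<forall>x\<in>I01. f x = F [x])"
  proof (intro allI impI, elim conjE)
    fix f H assume h: "strict_decr_on I01 f" "variadic_t_norm H"
      "\<forall>xs\<in>tuples. xs \<noteq> [] \<longrightarrow> F xs = f (the (H xs))"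
    show "\<forall>x\<in>I01. f x = F [x]" using backward_core[OF assms decr_inj[OF h(1)] h(2,3)] by blast
  qed
qed

end
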